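(* Let $a$ and $b$ be relatively prime integers with $1<a<b$, let $(u,v)$ be the definitely least solution of $ax+by=1$, and let $S=\langle a,b\rangle$. Then $\min I(S)=F(S)-(|u|-1)a-(|v|-1)b$.
   Context: $\langle a,b\rangle=\{\lambda_1a+\lambda_2b:\lambda_1,\lambda_2\in\mathbb{N}\}$, with $\mathbb{N}$ the nonnegative integers. $F(S)$ is the Frobenius number of $S$, the largest integer not in $S$. An isolated gap of $S$ is an element $x\in\mathbb{N}\setminus S$ with $x-1,x+1\in S$; $I(S)$ is the set of isolated gaps. The definitely least solution $(u,v)$ of $ax+by=1$ is the unique integer solution with both $|u|$ and $|v|$ minimal; equivalently the solution with $|u|\le b/2$, $|v|\le a/2$. *)

theory Defs
  imports Main
begin

definition gen2 :: "int \<Rightarrow> int \<Rightarrow> int set" where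
  "gen2 a b = {l1 * a + l2 * b | l1 l2. l1 \<ge> 0 \<and> l2 \<ge> 0}"

definition frobenius :: "int set \<Rightarrow> int" where
  "frobenius S = (GREATEST x. x \<notin> S)"

definition isolated_gaps :: "int set \<Rightarrow> int set" where
  "isolated_gaps S = {x. x \<ge> 0 \<and> x \<notin> S \<and> x - 1 \<in> S \<and> x + 1 \<in> S}"

definition definitely_least_solution :: "int \<Rightarrow> int \<Rightarrow> int \<Rightarrow> int \<Rightarrow> bool" where
  "definitely_least_solution a b u v \<longleftrightarrow>
     a * u + b * v = 1 \<and>
     (\<forall>x y. a * x + b * y = 1 \<longrightarrow> \<bar>u\<bar> \<le> \<bar>x\<bar> \<and> \<bar>v\<bar> \<le> \<bar>y\<bar>)"

end

theory Submission
  imports Defs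
begin

lemma L1:
  fixes a b u v n :: int
  assumes "a * u + b * v = 1" "0 < a"
  shows "\<exists>i j. n = i * a + j * b \<and> 0 \<le> j \<and> j < a"
proof -
  define j where "j = (n * v) mod a"
  define i where "i = n * u + b * ((n * v) div a)"
  have "n = n * (a * u + b * v)" using assms by simp
  also have "\<dots> = (n*u) * a + (n*v) * b" by (simp add: algebra_simps)
  also have "n * v = a * ((n*v) div a) + j" unfolding j_def by simp
  finally have "n = i * a + j * b" unfolding i_def by (simp add: algebra_simps)
  moreover have "0 \<le> j" "j < a" unfolding j_def using assms by auto
  ultimately show ?thesis by blast
qed

lemma L2:
  fixes a b i j :: int
  assumes "coprime a b" "0 < a" "0 < b" "0 \<le> j" "j < a" "i < 0"
  shows "i * a + j * b \<notin> gen2 a b"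
proof
  assume "i * a + j * b \<in> gen2 a b"
  then obtain p q where pq: "i * a + j * b = p * a + q * b" "p \<ge> 0" "q \<ge> 0"
    unfolding gen2_def by auto
  have e: "(p - i) * a = (j - q) * b" using pq(1) by (simp add: algebra_simps)
  have "(p - i) * a > 0" using assms pq by simp
  hence "(j - q) * b > 0" using e by simp
  hence pos: "j - q > 0" using assms(3) by (simp add: zero_less_mult_iff)
  have "a dvd (j - q) * b" using e by (metis dvd_triv_right)
  hence "a dvd (j - q)" using assms(1) by (simp add: coprime_dvd_mult_left_iff)
  hence "a \<le> j - q" using pos by (simp add: zdvd_imp_le)
  thus False using assms pq by simp
qed

lemma L3:
  fixes a b i j :: int
  assumes "0 \<le> i" "0 \<le> j"
  shows "i * a + j * b \<in> gen2 a b"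
  unfolding gen2_def using assms by auto

lemma Lnot:
  fixes a b u v x :: int
  assumes "coprime a b" "1 < a" "1 < b" "a * u + b * v = 1" "x \<notin> gen2 a b"
  shows "\<exists>i j. x = i * a + j * b \<and> 0 \<le> j \<and> j < a \<and> i < 0"
proof -
  obtain i j where ij: "x = i * a + j * b" "0 \<le> j" "j < a" using L1[OF assms(4)] assms(2) by force
  have "\<not> 0 \<le> i" using L3[of i j a b] ij assms(5) by auto
  hence "i < 0" by simp
  thus ?thesis using ij by blast
qed

lemma frob:
  fixes a b u v :: int
  assumes "coprime a b" "1 < a" "1 < b" "a * u + b * v = 1"
  shows "frobenius (gen2 a b) = a * b - a - b"
  unfolding frobenius_def
proof (rule Greatest_equality)
  have "(-1) * a + (a - 1) * b \<notin> gen2 a b" using L2[OF assms(1), of "a - 1" "-1"] assms by simp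
  thus "a * b - a - b \<notin> gen2 a b" by (simp add: algebra_simps)
next
  fix y assume "y \<notin> gen2 a b"
  then obtain i j where ij: "y = i * a + j * b" "0 \<le> j" "j < a" "i < 0"
    using Lnot[OF assms] by blast
  have "i * a \<le> (-1) * a" using ij assms by (intro mult_right_mono) auto
  moreover have "j * b \<le> (a - 1) * b" using ij assms by (intro mult_right_mono) auto
  ultimately show "y \<le> a * b - a - b" using ij by (simp add: algebra_simps)
qed

lemma main:
  fixes a b w z :: int
  assumes "coprime a b" "1 < a" "1 < b" "1 \<le> w" "1 \<le> z" "2 * w \<le> b" "2 * z \<le> a"
    and bez: "b * z - a * w = 1 \<or> a * w - b * z = 1"
  shows "(-w) * a + (a - z) * b \<in> isolated_gaps (gen2 a b)"
    and "\<And>x. x \<in> isolated_gaps (gen2 a b) \<Longrightarrow> (-w) * a + (a - z) * b \<le> x"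
proof -
  obtain u v where uv: "a * u + b * v = 1"
    using bez by (metis add.commute diff_conv_add_uminus mult_minus_right)
  let ?x = "(-w) * a + (a - z) * b"
  have nx: "?x \<notin> gen2 a b" using L2[OF assms(1), of "a - z" "-w"] assms by simp
  have A: "(b - 2 * w) * a + 0 * b \<in> gen2 a b" using assms by (intro L3) auto
  have B: "0 * a + (a - 2 * z) * b \<in> gen2 a b" using assms by (intro L3) auto
  have "?x - 1 \<in> gen2 a b \<and> ?x + 1 \<in> gen2 a b"
  proof (cases "b * z - a * w = 1")
    case True
    hence "?x - 1 = 0 * a + (a - 2 * z) * b" "?x + 1 = (b - 2 * w) * a + 0 * b"
      by (simp_all add: algebra_simps)
    thus ?thesis using A B by simp
  next
    case False
    hence "a * w - b * z = 1" using bez by simp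
    hence "?x + 1 = 0 * a + (a - 2 * z) * b" "?x - 1 = (b - 2 * w) * a + 0 * b"
      by (simp_all add: algebra_simps)
    thus ?thesis using A B by simp
  qed
  moreover have "?x \<ge> 0"
  proof -
    have "(2 * w) * a \<le> b * a" using assms by (intro mult_right_mono) auto
    moreover have "(2 * z) * b \<le> a * b" using assms by (intro mult_right_mono) auto
    ultimately show ?thesis by (simp add: algebra_simps)
  qed
  ultimately show "?x \<in> isolated_gaps (gen2 a b)" using nx unfolding isolated_gaps_def by simp
next
  fix x assume "x \<in> isolated_gaps (gen2 a b)"
  hence x: "x \<notin> gen2 a b" "x - 1 \<in> gen2 a b" "x + 1 \<in> gen2 a b"
    unfolding isolated_gaps_def by auto
  obtain u v where uv: "a * u + b * v = 1"
    using bez by (metis add.commute diff_conv_add_uminus mult_minus_right)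
  obtain i j where ij: "x = i * a + j * b" "0 \<le> j" "j < a" "i < 0"
    using Lnot[OF assms(1-3) uv x(1)] by blast
  have "-w \<le> i \<and> a - z \<le> j"
  proof (cases "b * z - a * w = 1")
    case True
    have e1: "x - 1 = (i + w) * a + (j - z) * b" using True ij by (simp add: algebra_simps)
    have e2: "x - 1 = (i + w - b) * a + (j - z + a) * b" using True ij by (simp add: algebra_simps)
    have e3: "x + 1 = (i - w) * a + (j + z) * b" using True ij by (simp add: algebra_simps)
    have e4: "x + 1 = (i - w + b) * a + (j + z - a) * b" using True ij by (simp add: algebra_simps)
    have "j \<ge> z"
    proof (rule ccontr)
      assume "\<not> j \<ge> z"
      thus False using L2[OF assms(1), of "j - z + a" "i + w - b"] e2 x(2) ij assms by auto
    qed
    hence "i + w \<ge> 0" using L2[OF assms(1), of "j - z" "i + w"] e1 x(2) ij assms by force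
    moreover have "j + z \<ge> a"
    proof (rule ccontr)
      assume "\<not> j + z \<ge> a"
      thus False using L2[OF assms(1), of "j + z" "i - w"] e3 x(3) ij assms by auto
    qed
    ultimately show ?thesis by simp
  next
    case False
    hence F: "a * w - b * z = 1" using bez by simp
    have e1: "x + 1 = (i + w) * a + (j - z) * b" using F ij by (simp add: algebra_simps)
    have e2: "x + 1 = (i + w - b) * a + (j - z + a) * b" using F ij by (simp add: algebra_simps)
    have e3: "x - 1 = (i - w) * a + (j + z) * b" using F ij by (simp add: algebra_simps)
    have e4: "x - 1 = (i - w + b) * a + (j + z - a) * b" using F ij by (simp add: algebra_simps)
    have "j \<ge> z"
    proof (rule ccontr)
      assume "\<not> j \<ge> z"
      thus False using L2[OF assms(1), of "j - z + a" "i + w - b"] e2 x(3) ij assms by auto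
    qed
    hence "i + w \<ge> 0" using L2[OF assms(1), of "j - z" "i + w"] e1 x(3) ij assms by force
    moreover have "j + z \<ge> a"
    proof (rule ccontr)
      assume "\<not> j + z \<ge> a"
      thus False using L2[OF assms(1), of "j + z" "i - w"] e3 x(2) ij assms by auto
    qed
    ultimately show ?thesis by simp
  qed
  hence h: "-w \<le> i" "a - z \<le> j" by auto
  have "(-w) * a \<le> i * a" using mult_right_mono[OF h(1), of a] assms(2) by simp
  moreover have "(a - z) * b \<le> j * b" using mult_right_mono[OF h(2), of b] assms(3) by simp
  ultimately show "(-w) * a + (a - z) * b \<le> x" using ij by simp
qed

theorem proposition4p9:
  fixes a b u v :: int
  assumes "coprime a b" and "1 < a" and "a < b"
    and "definitely_least_solution a b u v"
  shows "isolated_gaps (gen2 a b) \<noteq> {} \<and>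
         Min (isolated_gaps (gen2 a b)) =
           frobenius (gen2 a b) - (\<bar>u\<bar> - 1) * a - (\<bar>v\<bar> - 1) * b"
proof -
  have uv: "a * u + b * v = 1" and m1: "\<bar>u\<bar> \<le> \<bar>u + b\<bar> \<and> \<bar>v\<bar> \<le> \<bar>v - a\<bar>"
    and m2: "\<bar>u\<bar> \<le> \<bar>u - b\<bar> \<and> \<bar>v\<bar> \<le> \<bar>v + a\<bar>"
  proof -
    have d: "a * u + b * v = 1" "\<And>x y. a * x + b * y = 1 \<Longrightarrow> \<bar>u\<bar> \<le> \<bar>x\<bar> \<and> \<bar>v\<bar> \<le> \<bar>y\<bar>"
      using assms(4) unfolding definitely_least_solution_def by auto
    have "a * (u + b) + b * (v - a) = 1" "a * (u - b) + b * (v + a) = 1" using d(1)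
      by (simp_all add: algebra_simps)
    thus "a * u + b * v = 1" "\<bar>u\<bar> \<le> \<bar>u + b\<bar> \<and> \<bar>v\<bar> \<le> \<bar>v - a\<bar>"
      "\<bar>u\<bar> \<le> \<bar>u - b\<bar> \<and> \<bar>v\<bar> \<le> \<bar>v + a\<bar>" using d by blast+
  qed
  have b1: "1 < b" using assms by simp
  define w where "w = \<bar>u\<bar>"
  define z where "z = \<bar>v\<bar>"
  have sg: "(u < 0 \<and> 0 < v) \<or> (0 < u \<and> v < 0)"
  proof (rule ccontr)
    assume "\<not> ?thesis"
    hence "(u \<ge> 0 \<and> v \<ge> 0) \<or> (u \<le> 0 \<and> v \<le> 0)" by auto
    thus False
    proof
      assume h: "u \<ge> 0 \<and> v \<ge> 0"
      show False
      proof (cases "u = 0")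
        case True thus False using uv b1 by (simp add: zmult_eq_1_iff)
      next
        case False
        hence "u \<ge> 1" using h by simp
        hence "a * u \<ge> a * 1" using assms by (intro mult_left_mono) auto
        moreover have "b * v \<ge> 0" using h b1 by simp
        ultimately show False using uv assms by linarith
      qed
    next
      assume h: "u \<le> 0 \<and> v \<le> 0"
      have "a * u \<le> 0" using h assms by (simp add: mult_nonneg_nonpos)
      moreover have "b * v \<le> 0" using h b1 by (simp add: mult_nonneg_nonpos)
      ultimately show False using uv by simp
    qed
  qed
  have w1: "1 \<le> w" "1 \<le> z" using sg unfolding w_def z_def by auto
  have w2: "2 * w \<le> b" "2 * z \<le> a" using sg m1 m2 assms unfolding w_def z_def by auto
  have bez: "b * z - a * w = 1 \<or> a * w - b * z = 1" using sg uv unfolding w_def z_def by auto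
  note M = main[OF assms(1,2) b1 w1 w2 bez]
  let ?x = "(-w) * a + (a - z) * b"
  have fin: "finite (isolated_gaps (gen2 a b))"
  proof (rule finite_subset)
    show "isolated_gaps (gen2 a b) \<subseteq> {0..a*b}"
    proof
      fix x assume xi: "x \<in> isolated_gaps (gen2 a b)"
      hence "x \<notin> gen2 a b" "x \<ge> 0" unfolding isolated_gaps_def by auto
      then obtain i j where ij: "x = i * a + j * b" "0 \<le> j" "j < a" "i < 0"
        using Lnot[OF assms(1,2) b1 uv] by blast
      have "i * a \<le> 0" using ij assms by (simp add: mult_nonpos_nonneg)
      moreover have "j * b \<le> a * b" using ij b1 by (intro mult_right_mono) auto
      ultimately show "x \<in> {0..a*b}" using ij \<open>x \<ge> 0\<close> by simp
    qed
  qed simp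
  have "Min (isolated_gaps (gen2 a b)) = ?x"
    using M fin by (intro Min_eqI) auto
  moreover have "frobenius (gen2 a b) = a * b - a - b" using frob[OF assms(1,2) b1 uv] .
  ultimately show ?thesis using M(1) unfolding w_def z_def by (auto simp: algebra_simps)
qed

end
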